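(* Let $(x(t),p(t))$ be a solution of Hamilton's equations $x_j'=\partial H/\partial p_j$, $p_j'=-\partial H/\partial x_j$ ($1\le j\le n+1$) for $H(x,p)=\tfrac12\sum_{j=1}^{n+1}\xi_j(x)^2p_j^2$ with initial condition $x(0)=x^0$, $p(0)=p^0$. Define $R_{n+1}(t):=|p_{n+1}(t)|$ and recursively $R_j(t):=\sqrt{R_{j+1}(t)^2x_j(t)^{2\alpha_j}+p_j(t)^2}$ for $1\le j\le n$. Then each $R_j^2$ is constant in $t$, with $R_{n+1}^2=(p^0_{n+1})^2$ and $R_j^2=R_{j+1}^2(x^0_j)^{2\alpha_j}+(p^0_j)^2$ for $1\le j\le n$.
   Context: Here $n\ge1$, $\alpha=(\alpha_1,\dots,\alpha_n)\in(\mathbb{N}\cup\{0\})^n$, and $\xi_j(x)=\prod_{i=1}^{j-1}x_i^{\alpha_i}$ for $x\in\mathbb{R}^{n+1}$ (empty product $=1$); this $H$ is the sub-Riemannian Hamiltonian of the Grushin space $\mathbb{G}^{n+1}_\alpha$ generated by $X_j=\xi_j\partial_{x_j}$. *)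

theory Defs
  imports "HOL-Analysis.Analysis"
begin

text \<open>Points of R^(n+1) are represented as functions nat => real, using the
coordinates 1..n+1 (other coordinates are irrelevant).\<close>

definition xi :: "(nat \<Rightarrow> nat) \<Rightarrow> nat \<Rightarrow> (nat \<Rightarrow> real) \<Rightarrow> real" where
  "xi alpha j x = (\<Prod>i\<in>{1..<j}. x i ^ alpha i)"

definition grushin_H :: "nat \<Rightarrow> (nat \<Rightarrow> nat) \<Rightarrow> (nat \<Rightarrow> real) \<Rightarrow> (nat \<Rightarrow> real) \<Rightarrow> real" where
  "grushin_H n alpha x p = 1/2 * (\<Sum>j=1..n+1. (xi alpha j x)^2 * (p j)^2)"

definition dH_dx :: "nat \<Rightarrow> (nat \<Rightarrow> nat) \<Rightarrow> (nat \<Rightarrow> real) \<Rightarrow> (nat \<Rightarrow> real) \<Rightarrow> nat \<Rightarrow> real" where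
  "dH_dx n alpha x p j = deriv (\<lambda>s. grushin_H n alpha (x(j := s)) p) (x j)"

definition dH_dp :: "nat \<Rightarrow> (nat \<Rightarrow> nat) \<Rightarrow> (nat \<Rightarrow> real) \<Rightarrow> (nat \<Rightarrow> real) \<Rightarrow> nat \<Rightarrow> real" where
  "dH_dp n alpha x p j = deriv (\<lambda>s. grushin_H n alpha x (p(j := s))) (p j)"

text \<open>Raux m = R_{n+1-m}: R_{n+1} = |p_{n+1}|,
  R_j = sqrt (R_{j+1}^2 x_j^(2 alpha_j) + p_j^2).\<close>
fun Raux :: "nat \<Rightarrow> (nat \<Rightarrow> nat) \<Rightarrow> (nat \<Rightarrow> real) \<Rightarrow> (nat \<Rightarrow> real) \<Rightarrow> nat \<Rightarrow> real" where
  "Raux n alpha x p 0 = \<bar>p (n+1)\<bar>"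
| "Raux n alpha x p (Suc m) =
     sqrt ((Raux n alpha x p m)^2 * (x (n - m)) ^ (2 * alpha (n - m)) + (p (n - m))^2)"

definition R :: "nat \<Rightarrow> (nat \<Rightarrow> nat) \<Rightarrow> (nat \<Rightarrow> real) \<Rightarrow> (nat \<Rightarrow> real) \<Rightarrow> nat \<Rightarrow> real" where
  "R n alpha x p j = Raux n alpha x p (n + 1 - j)"

end

theory Submission
  imports Defs
begin

lemma R_rec:
  assumes "1 \<le> j" "j \<le> n"
  shows "(R n alpha x p j)^2 = (R n alpha x p (j+1))^2 * x j ^ (2 * alpha j) + (p j)^2"
proof -
  have e1: "n + 1 - j = Suc (n - j)" and e2: "n - (n - j) = j" and e3: "n + 1 - (j+1) = n - j"
    using assms by auto
  have nn: "0 \<le> x j ^ (2 * alpha j)" by (simp add: power_mult)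
  show ?thesis unfolding R_def e1 e3 Raux.simps e2
    using nn by (simp add: mult.commute)
qed

lemma R_last: "(R n alpha x p (n+1))^2 = (p (n+1))^2"
  unfolding R_def by simp

lemma Raux_dep:
  "(\<And>i. n + 1 - m \<le> i \<Longrightarrow> x' i = x i \<and> p' i = p i) \<Longrightarrow> Raux n alpha x' p' m = Raux n alpha x p m"
proof (induction m)
  case 0 then show ?case by simp
next
  case (Suc m)
  have "Raux n alpha x' p' m = Raux n alpha x p m" using Suc by auto
  moreover have "x' (n - m) = x (n - m)" "p' (n - m) = p (n - m)" using Suc.prems by auto
  ultimately show ?case by simp
qed

lemma R_dep:
  assumes "j \<le> n+1" "\<And>i. j \<le> i \<Longrightarrow> x' i = x i \<and> p' i = p i"
  shows "R n alpha x' p' j = R n alpha x p j"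
  unfolding R_def by (rule Raux_dep) (use assms in auto)

lemma xi_dep: "k \<ge> j \<Longrightarrow> xi alpha j (x(k:=s)) = xi alpha j x"
  unfolding xi_def by (intro prod.cong) auto

lemma xi_Suc: "1 \<le> j \<Longrightarrow> xi alpha (j+1) x = xi alpha j x * x j ^ alpha j"
  unfolding xi_def by (simp add: prod.atLeastLessThan_Suc)

lemma tail_sum:
  assumes "1 \<le> j" "j \<le> n+1"
  shows "(\<Sum>k=j..n+1. (xi alpha k x)^2 * (p k)^2) = (xi alpha j x)^2 * (R n alpha x p j)^2"
proof -
  have "\<forall>j. n + 1 - j = d \<longrightarrow> 1 \<le> j \<longrightarrow> j \<le> n+1 \<longrightarrow>
     (\<Sum>k=j..n+1. (xi alpha k x)^2 * (p k)^2) = (xi alpha j x)^2 * (R n alpha x p j)^2" for d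
  proof (induction d)
    case 0
    then show ?case using R_last by auto
  next
    case (Suc d)
    show ?case
    proof (intro allI impI)
      fix j assume h: "n + 1 - j = Suc d" "1 \<le> j" "j \<le> n+1"
      have "(\<Sum>k=j..n+1. (xi alpha k x)^2 * (p k)^2) = (xi alpha j x)^2 * (p j)^2 + (\<Sum>k=Suc j..n+1. (xi alpha k x)^2 * (p k)^2)"
        using h by (simp add: sum.atLeast_Suc_atMost)
      also have "(\<Sum>k=Suc j..n+1. (xi alpha k x)^2 * (p k)^2) = (xi alpha (j+1) x)^2 * (R n alpha x p (j+1))^2"
        using Suc.IH h by auto
      also have "(xi alpha j x)^2 * (p j)^2 + (xi alpha (j+1) x)^2 * (R n alpha x p (j+1))^2
          = (xi alpha j x)^2 * (R n alpha x p j)^2"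
      proof -
        have "xi alpha (j+1) x = xi alpha j x * x j ^ alpha j" using h xi_Suc[of j alpha x] by simp
        moreover have "(R n alpha x p j)^2 = (R n alpha x p (j+1))^2 * x j ^ (2 * alpha j) + (p j)^2"
          using h by (intro R_rec) auto
        ultimately show ?thesis by (simp add: power_mult_distrib power_mult[symmetric] algebra_simps)
      qed
      finally show "(\<Sum>k=j..n+1. (xi alpha k x)^2 * (p k)^2) = (xi alpha j x)^2 * (R n alpha x p j)^2" .
    qed
  qed
  then show ?thesis using assms by blast
qed

lemma H_split:
  assumes "1 \<le> j" "j \<le> n+1"
  shows "grushin_H n alpha x p = 1/2 * ((\<Sum>k\<in>{1..<j}. (xi alpha k x)^2 * (p k)^2) + (xi alpha j x)^2 * (R n alpha x p j)^2)"
proof -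
  have "{1..n+1} = {1..<j} \<union> {j..n+1}" using assms by auto
  then have "(\<Sum>k=1..n+1. (xi alpha k x)^2 * (p k)^2) = (\<Sum>k\<in>{1..<j}. (xi alpha k x)^2 * (p k)^2) + (\<Sum>k=j..n+1. (xi alpha k x)^2 * (p k)^2)"
    by (simp add: sum.union_disjoint ivl_disj_int)
  then show ?thesis unfolding grushin_H_def using tail_sum[OF assms] by simp
qed

lemma R_upd_p:
  assumes "1 \<le> j" "j \<le> n+1"
  shows "(R n alpha x (p(j:=s)) j)^2 = (R n alpha x p j)^2 - (p j)^2 + s^2"
proof (cases "j \<le> n")
  case True
  have d: "R n alpha x (p(j:=s)) (j+1) = R n alpha x p (j+1)"
    by (rule R_dep) (use True in auto)
  show ?thesis using R_rec[OF assms(1) True, of alpha x "p(j:=s)"] R_rec[OF assms(1) True, of alpha x p] d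
    by simp
next
  case False
  then have "j = n+1" using assms by auto
  then show ?thesis using R_last[of n alpha x "p(j:=s)"] R_last[of n alpha x p] by simp
qed

lemma dH_dp_eq:
  assumes "1 \<le> j" "j \<le> n+1"
  shows "dH_dp n alpha x p j = (xi alpha j x)^2 * p j"
proof -
  define A where "A = (\<Sum>k\<in>{1..<j}. (xi alpha k x)^2 * (p k)^2)"
  define C where "C = (R n alpha x p j)^2 - (p j)^2"
  have A: "(\<Sum>k\<in>{1..<j}. (xi alpha k x)^2 * ((p(j:=s)) k)^2) = A" for s
    unfolding A_def by (intro sum.cong) auto
  have f: "(\<lambda>s. grushin_H n alpha x (p(j := s))) = (\<lambda>s. 1/2 * (A + (xi alpha j x)^2 * (C + s^2)))"
  proof
    fix s
    have "grushin_H n alpha x (p(j := s)) = 1/2 * (A + (xi alpha j x)^2 * (R n alpha x (p(j:=s)) j)^2)"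
      by (subst H_split[OF assms]) (simp only: A)
    then show "grushin_H n alpha x (p(j := s)) = 1/2 * (A + (xi alpha j x)^2 * (C + s^2))"
      by (simp add: R_upd_p[OF assms] C_def)
  qed
  have "((\<lambda>s. 1/2 * (A + (xi alpha j x)^2 * (C + s^2))) has_real_derivative (xi alpha j x)^2 * p j) (at (p j))"
    by (auto intro!: derivative_eq_intros)
  then show ?thesis unfolding dH_dp_def f by (rule DERIV_imp_deriv)
qed

lemma dH_dx_eq:
  assumes "1 \<le> j" "j \<le> n"
  shows "dH_dx n alpha x p j = (xi alpha j x)^2 * (R n alpha x p (j+1))^2 * alpha j * x j ^ (2 * alpha j - 1)"
proof -
  define A where "A = (\<Sum>k\<in>{1..<j}. (xi alpha k x)^2 * (p k)^2)"
  define B where "B = (R n alpha x p (j+1))^2"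
  have A: "(\<Sum>k\<in>{1..<j}. (xi alpha k (x(j:=s)))^2 * (p k)^2) = A" for s
    unfolding A_def by (intro sum.cong refl) (simp add: xi_dep)
  have Bd: "(R n alpha (x(j:=s)) p (j+1))^2 = B" for s
    unfolding B_def by (subst R_dep) (use assms in auto)
  have f: "(\<lambda>s. grushin_H n alpha (x(j := s)) p) = (\<lambda>s. 1/2 * (A + (xi alpha j x)^2 * (B * s ^ (2 * alpha j) + (p j)^2)))"
  proof
    fix s
    have "grushin_H n alpha (x(j := s)) p = 1/2 * (A + (xi alpha j (x(j:=s)))^2 * (R n alpha (x(j:=s)) p j)^2)"
      by (subst H_split[of j n]) (use assms in \<open>simp_all only: A\<close>)
    also have "(R n alpha (x(j:=s)) p j)^2 = B * s ^ (2 * alpha j) + (p j)^2"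
      using R_rec[OF assms, of alpha "x(j:=s)" p] Bd[of s] by simp
    finally show "grushin_H n alpha (x(j := s)) p = 1/2 * (A + (xi alpha j x)^2 * (B * s ^ (2 * alpha j) + (p j)^2))"
      by (simp only: xi_dep le_refl)
  qed
  have "((\<lambda>s. 1/2 * (A + (xi alpha j x)^2 * (B * s ^ (2 * alpha j) + (p j)^2))) has_real_derivative
       (xi alpha j x)^2 * B * alpha j * x j ^ (2 * alpha j - 1)) (at (x j))"
    by (auto intro!: derivative_eq_intros)
  then show ?thesis unfolding dH_dx_def f B_def by (rule DERIV_imp_deriv)
qed

lemma dH_dx_last: "dH_dx n alpha x p (n+1) = 0"
proof -
  have f: "(\<lambda>s. grushin_H n alpha (x(n+1 := s)) p) = (\<lambda>s. grushin_H n alpha x p)"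
  proof
    fix s
    have A: "(\<Sum>k\<in>{1..<n+1}. (xi alpha k (x(n+1:=s)))^2 * (p k)^2) = (\<Sum>k\<in>{1..<n+1}. (xi alpha k x)^2 * (p k)^2)"
      by (intro sum.cong refl) (simp add: xi_dep)
    have "grushin_H n alpha (x(n+1 := s)) p = 1/2 * ((\<Sum>k\<in>{1..<n+1}. (xi alpha k x)^2 * (p k)^2) + (xi alpha (n+1) (x(n+1:=s)))^2 * (R n alpha (x(n+1:=s)) p (n+1))^2)"
      by (subst H_split[of "n+1" n]) (simp_all only: A le_refl le_add2)
    also have "\<dots> = 1/2 * ((\<Sum>k\<in>{1..<n+1}. (xi alpha k x)^2 * (p k)^2) + (xi alpha (n+1) x)^2 * (R n alpha x p (n+1))^2)"
      by (simp only: R_last xi_dep le_refl)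
    also have "\<dots> = grushin_H n alpha x p"
      by (rule H_split[symmetric]) auto
    finally show "grushin_H n alpha (x(n+1 := s)) p = grushin_H n alpha x p" .
  qed
  show ?thesis unfolding dH_dx_def f by simp
qed

theorem mainTheorem7:
  fixes n :: nat and alpha :: "nat \<Rightarrow> nat"
    and x p :: "real \<Rightarrow> nat \<Rightarrow> real" and x0 p0 :: "nat \<Rightarrow> real" and I :: "real set"
  assumes "n \<ge> 1"
    and "is_interval I" and "0 \<in> I"
    and "x 0 = x0" and "p 0 = p0"
    and "\<And>t j. t \<in> I \<Longrightarrow> j \<in> {1..n+1} \<Longrightarrow>
           ((\<lambda>s. x s j) has_real_derivative dH_dp n alpha (x t) (p t) j) (at t within I)"
    and "\<And>t j. t \<in> I \<Longrightarrow> j \<in> {1..n+1} \<Longrightarrow>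
           ((\<lambda>s. p s j) has_real_derivative - dH_dx n alpha (x t) (p t) j) (at t within I)"
  shows "\<forall>t\<in>I. (\<forall>j\<in>{1..n+1}. (R n alpha (x t) (p t) j)^2 = (R n alpha x0 p0 j)^2)
            \<and> (R n alpha (x t) (p t) (n+1))^2 = (p0 (n+1))^2
            \<and> (\<forall>j\<in>{1..n}. (R n alpha (x t) (p t) j)^2
                   = (R n alpha (x t) (p t) (j+1))^2 * (x0 j)^(2 * alpha j) + (p0 j)^2)"
proof -
  note xd = assms(6) and pd = assms(7)
  define F where "F j t = (R n alpha (x t) (p t) j)^2" for j t
  have D: "\<forall>j. n + 1 - j = d \<longrightarrow> 1 \<le> j \<longrightarrow> j \<le> n+1 \<longrightarrow>
      (\<forall>t\<in>I. (F j has_real_derivative 0) (at t within I))" for d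
  proof (induction d)
    case 0
    show ?case
    proof (intro allI impI ballI)
      fix j t assume h: "n + 1 - j = 0" "1 \<le> j" "j \<le> n+1" "t \<in> I"
      then have j: "j = n+1" by auto
      have f: "F j = (\<lambda>t. (p t (n+1))^2)" unfolding F_def j by (simp only: R_last)
      have "((\<lambda>t. (p t (n+1))^2) has_real_derivative of_nat 2 * ((- dH_dx n alpha (x t) (p t) (n+1)) * (p t (n+1))^(2 - Suc 0))) (at t within I)"
        by (rule DERIV_power[OF pd]) (use h in auto)
      then show "(F j has_real_derivative 0) (at t within I)"
        unfolding f using dH_dx_last[of n alpha "x t" "p t"] by simp
    qed
  next
    case (Suc d)
    show ?case
    proof (intro allI impI ballI)
      fix j t assume h: "n + 1 - j = Suc d" "1 \<le> j" "j \<le> n+1" "t \<in> I"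
      then have jn: "j \<le> n" by auto
      have IH: "(F (j+1) has_real_derivative 0) (at t within I)"
        using Suc.IH h by auto
      have f: "F j = (\<lambda>t. F (j+1) t * (x t j)^(2 * alpha j) + (p t j)^2)"
        unfolding F_def using R_rec[OF h(2) jn] by auto
      have xj: "((\<lambda>s. x s j) has_real_derivative (xi alpha j (x t))^2 * p t j) (at t within I)"
        using xd[of t j] h by (simp add: dH_dp_eq)
      have pj: "((\<lambda>s. p s j) has_real_derivative - ((xi alpha j (x t))^2 * F (j+1) t * alpha j * x t j ^ (2 * alpha j - 1))) (at t within I)"
        using pd[of t j] h jn by (simp add: dH_dx_eq F_def)
      have "(F j has_real_derivative
          0 * (x t j)^(2 * alpha j) + (of_nat (2 * alpha j) * ((xi alpha j (x t))^2 * p t j * (x t j)^(2 * alpha j - Suc 0))) * F (j+1) t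
          + of_nat 2 * (- ((xi alpha j (x t))^2 * F (j+1) t * alpha j * x t j ^ (2 * alpha j - 1)) * (p t j)^(2 - Suc 0))) (at t within I)"
        unfolding f by (intro DERIV_add DERIV_mult IH DERIV_power xj pj)
      then show "(F j has_real_derivative 0) (at t within I)"
        by (rule DERIV_cong) (simp add: algebra_simps)
    qed
  qed
  have cvx: "convex I" using assms(2) by (rule is_interval_convex)
  have const: "F j t = F j 0" if "j \<in> {1..n+1}" "t \<in> I" for j t
  proof -
    have "\<forall>s\<in>I. (F j has_real_derivative 0) (at s within I)"
      using D[of "n+1-j"] that(1) by auto
    then obtain c where "\<forall>s\<in>I. F j s = c"
      using has_field_derivative_zero_constant[OF cvx, of "F j"] by blast
    then show ?thesis using that assms(3) by auto
  qed
  have F0: "F j 0 = (R n alpha x0 p0 j)^2" for j unfolding F_def using assms(4,5) by simp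
  show ?thesis
  proof
    fix t assume t: "t \<in> I"
    have c1: "\<forall>j\<in>{1..n+1}. (R n alpha (x t) (p t) j)^2 = (R n alpha x0 p0 j)^2"
      using const t F0 unfolding F_def by auto
    have c2: "(R n alpha (x t) (p t) (n+1))^2 = (p0 (n+1))^2"
      using const[of "n+1" t] t F0[of "n+1"] R_last[of n alpha x0 p0] unfolding F_def by simp
    have c3: "\<forall>j\<in>{1..n}. (R n alpha (x t) (p t) j)^2
                   = (R n alpha (x t) (p t) (j+1))^2 * (x0 j)^(2 * alpha j) + (p0 j)^2"
    proof
      fix j assume j: "j \<in> {1..n}"
      have "(R n alpha (x t) (p t) j)^2 = (R n alpha x0 p0 j)^2"
        using const[of j t] t F0[of j] j unfolding F_def by auto
      also have "\<dots> = (R n alpha x0 p0 (j+1))^2 * (x0 j)^(2 * alpha j) + (p0 j)^2"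
        using j by (intro R_rec) auto
      also have "(R n alpha x0 p0 (j+1))^2 = (R n alpha (x t) (p t) (j+1))^2"
        using const[of "j+1" t] t F0[of "j+1"] j unfolding F_def by auto
      finally show "(R n alpha (x t) (p t) j)^2
                   = (R n alpha (x t) (p t) (j+1))^2 * (x0 j)^(2 * alpha j) + (p0 j)^2" .
    qed
    show "(\<forall>j\<in>{1..n+1}. (R n alpha (x t) (p t) j)^2 = (R n alpha x0 p0 j)^2)
            \<and> (R n alpha (x t) (p t) (n+1))^2 = (p0 (n+1))^2
            \<and> (\<forall>j\<in>{1..n}. (R n alpha (x t) (p t) j)^2
                   = (R n alpha (x t) (p t) (j+1))^2 * (x0 j)^(2 * alpha j) + (p0 j)^2)"
      using c1 c2 c3 by blast
  qed
qed

end
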